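(* Let $\mathcal{X}$ be a nonempty finite set and let $k$ be a strong kernel on $\mathcal{X}$. Then the image of $k$ has at most $2|\mathcal{X}|-1$ elements, i.e. $|\{k(x,y): x,y\in\mathcal{X}\}|\le 2|\mathcal{X}|-1$.
   Context: A strong kernel on a set $\mathcal{X}$ is a symmetric function $k:\mathcal{X}\times\mathcal{X}\to\mathbb{R}_{\ge 0}$ such that $k(x,y)\ge\min\{k(x,z),k(z,y)\}$ for all $x,y,z\in\mathcal{X}$. *)

theory Defs
  imports Complex_Main
begin

definition strong_kernel :: "'a set \<Rightarrow> ('a \<Rightarrow> 'a \<Rightarrow> real) \<Rightarrow> bool" where
  "strong_kernel X k \<longleftrightarrow>
     (\<forall>x\<in>X. \<forall>y\<in>X. k x y = k y x) \<and>
     (\<forall>x\<in>X. \<forall>y\<in>X. k x y \<ge> 0) \<and>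
     (\<forall>x\<in>X. \<forall>y\<in>X. \<forall>z\<in>X. k x y \<ge> min (k x z) (k z y))"

end

theory Submission
  imports Defs
begin

definition offd :: "'a set \<Rightarrow> ('a \<Rightarrow> 'a \<Rightarrow> real) \<Rightarrow> real set" where
  "offd X k = {k x y | x y. x \<in> X \<and> y \<in> X \<and> x \<noteq> y}"

lemma sk_sub: "strong_kernel X k \<Longrightarrow> Y \<subseteq> X \<Longrightarrow> strong_kernel Y k"
  unfolding strong_kernel_def by blast

lemma offd_finite: "finite X \<Longrightarrow> finite (offd X k)"
proof -
  assume "finite X"
  have "offd X k \<subseteq> (\<lambda>(x,y). k x y) ` (X \<times> X)" unfolding offd_def by auto
  thus ?thesis using \<open>finite X\<close> by (meson finite_SigmaI finite_imageI finite_subset)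
qed

lemma offd_bound:
  assumes "finite X" "X \<noteq> {}" "strong_kernel X k"
  shows "card (offd X k) \<le> card X - 1"
  using assms
proof (induction "card X" arbitrary: X rule: less_induct)
  case less
  note fin = less.prems(1) and ne = less.prems(2) and sk = less.prems(3)
  show ?case
  proof (cases "offd X k = {}")
    case True thus ?thesis by simp
  next
    case False
    define m where "m = Min (offd X k)"
    have finO: "finite (offd X k)" using offd_finite fin by blast
    have "m \<in> offd X k" unfolding m_def using False finO by simp
    then obtain a b where ab: "a \<in> X" "b \<in> X" "a \<noteq> b" "k a b = m" unfolding offd_def by blast
    have mle: "\<And>x y. x \<in> X \<Longrightarrow> y \<in> X \<Longrightarrow> x \<noteq> y \<Longrightarrow> m \<le> k x y"
      unfolding m_def using finO by (intro Min_le) (auto simp: offd_def)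
    define A where "A = {y \<in> X. y = a \<or> k a y > m}"
    define B where "B = X - A"
    have AX: "A \<subseteq> X" and BX: "B \<subseteq> X" unfolding A_def B_def by auto
    have aA: "a \<in> A" using ab unfolding A_def by auto
    have bB: "b \<in> B" using ab unfolding A_def B_def by auto
    have finA: "finite A" and finB: "finite B" using AX BX fin finite_subset by auto
    have symm: "\<And>x y. x \<in> X \<Longrightarrow> y \<in> X \<Longrightarrow> k x y = k y x" using sk unfolding strong_kernel_def by blast
    have ultra: "\<And>x y z. x \<in> X \<Longrightarrow> y \<in> X \<Longrightarrow> z \<in> X \<Longrightarrow> k x y \<ge> min (k x z) (k z y)"
      using sk unfolding strong_kernel_def by blast
    have cross: "k x y = m" if "x \<in> A" "y \<in> B" for x y
    proof -
      have xX: "x \<in> X" and yX: "y \<in> X" and xy: "x \<noteq> y" using that unfolding A_def B_def by auto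
      have ny: "\<not> k a y > m" "y \<noteq> a" using that unfolding A_def B_def by auto
      have "k x y \<le> m"
      proof (rule ccontr)
        assume c: "\<not> k x y \<le> m"
        show False
        proof (cases "x = a")
          case True thus False using c ny by simp
        next
          case False
          hence "k a x > m" using that(1) unfolding A_def by auto
          moreover have "k a y \<ge> min (k a x) (k x y)" using ultra ab(1) xX yX by blast
          ultimately show False using c ny by linarith
        qed
      qed
      thus ?thesis using mle[OF xX yX xy] by simp
    qed
    have sub: "offd X k \<subseteq> insert m (offd A k \<union> offd B k)"
    proof
      fix v assume "v \<in> offd X k"
      then obtain x y where xy: "x \<in> X" "y \<in> X" "x \<noteq> y" "v = k x y" unfolding offd_def by blast
      show "v \<in> insert m (offd A k \<union> offd B k)"
      proof (cases "x \<in> A")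
        case True
        show ?thesis
        proof (cases "y \<in> A")
          case True thus ?thesis using \<open>x \<in> A\<close> xy unfolding offd_def by blast
        next
          case False hence "y \<in> B" using xy unfolding B_def by auto
          thus ?thesis using cross \<open>x \<in> A\<close> xy by auto
        qed
      next
        case False hence xB: "x \<in> B" using xy unfolding B_def by auto
        show ?thesis
        proof (cases "y \<in> A")
          case True
          hence "k y x = m" using cross xB by auto
          thus ?thesis using symm xy by auto
        next
          case False hence "y \<in> B" using xy unfolding B_def by auto
          thus ?thesis using xB xy unfolding offd_def by blast
        qed
      qed
    qed
    have cXAB: "card X = card A + card B" unfolding B_def using AX fin
      by (metis card_Diff_subset finite_subset le_add_diff_inverse card_mono)
    have cA: "card A \<ge> 1" "card B \<ge> 1" using aA bB finA finB card_0_eq by fastforce+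
    have IA: "card (offd A k) \<le> card A - 1"
      using less.hyps[of A] cXAB cA finA aA sk_sub[OF sk AX] by fastforce
    have IB: "card (offd B k) \<le> card B - 1"
      using less.hyps[of B] cXAB cA finB bB sk_sub[OF sk BX] by fastforce
    have "card (offd X k) \<le> card (insert m (offd A k \<union> offd B k))"
      using sub offd_finite finA finB by (intro card_mono) auto
    also have "\<dots> \<le> Suc (card (offd A k \<union> offd B k))" by (simp add: card_insert_le_m1)
    also have "\<dots> \<le> Suc (card (offd A k) + card (offd B k))" using card_Un_le by simp
    finally show ?thesis using IA IB cA cXAB by linarith
  qed
qed

theorem mainTheorem4:
  fixes X :: "'a set" and k :: "'a \<Rightarrow> 'a \<Rightarrow> real"
  assumes "finite X" and "X \<noteq> {}" and "strong_kernel X k"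
  shows "card {k x y | x y. x \<in> X \<and> y \<in> X} \<le> 2 * card X - 1"
proof -
  have "{k x y | x y. x \<in> X \<and> y \<in> X} \<subseteq> (\<lambda>x. k x x) ` X \<union> offd X k"
    unfolding offd_def by auto
  hence "card {k x y | x y. x \<in> X \<and> y \<in> X} \<le> card ((\<lambda>x. k x x) ` X \<union> offd X k)"
    using assms(1) offd_finite by (intro card_mono) auto
  also have "\<dots> \<le> card ((\<lambda>x. k x x) ` X) + card (offd X k)" by (rule card_Un_le)
  also have "\<dots> \<le> card X + (card X - 1)"
    using card_image_le[OF assms(1)] offd_bound[OF assms] by (intro add_mono) auto
  finally show ?thesis by linarith
qed

end
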